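(* Let $q$ be a prime power, $n\ge 1$, and let $C=\langle B_r\rangle\oplus\langle B_t\rangle\subseteq\mathbb{F}_q^n$ be an $\mathbb{F}_q$-linear code, where $B_r$ is an $r\times n$ matrix and $B_t$ a $t\times n$ matrix over $\mathbb{F}_q$, each with linearly independent rows, and $t=\dim_{\mathbb{F}_q}\langle B_t\rangle\ge 2$. Let $A$ be an invertible $t\times t$ matrix over $\mathbb{F}_q$ having no eigenvalue in $\mathbb{F}_q$, and let $D_A\subseteq\mathbb{F}_q^{2n}$ be the code defined below. Then $D_A$ gives rise to an EAQECC with parameters $[[n,\,n-2r-t+c',\,d';\,c']]_q$, i.e. $c(D_A)=c'$, $k(D_A)=n-2r-t+c'$ and $d(D_A)=d'$, where $$c'=\frac12\,\mathrm{rank}\begin{pmatrix} B_tB_t^TA^T-AB_tB_t^T & -AB_tB_r^T & B_tB_r^T\\ B_rB_t^TA^T & 0 & B_rB_r^T\\ -B_rB_t^T & -B_rB_r^T & 0\end{pmatrix},$$ and $d'\ge \min\left\{\delta_1,\left\lceil\left(1+\frac1q\right)\delta_2\right\rceil\right\}$ with $\delta_1=d_H(C^{\perp_e})$ and $\delta_2=d_H(\langle B_r\rangle^{\perp_e})$.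
   Context: $\mathbb{F}_q$ is the finite field with $q$ elements. For $x,y\in\mathbb{F}_q^n$, $x\cdot_e y=\sum_i x_iy_i$ is the Euclidean inner product and $V^{\perp_e}$ denotes the Euclidean dual of a subspace $V$. For a matrix $B$, $\langle B\rangle$ is the row space of $B$. $d_H(V)$ is the minimum Hamming weight of a nonzero vector of $V$. On $\mathbb{F}_q^{2n}$ the symplectic product is $(x|y)\cdot_s(z|w)=x\cdot_e w-z\cdot_e y$, and $D^{\perp_s}$ denotes the symplectic dual of $D$. The symplectic weight of $(x|y)$ is $\#\{j:(x_j,y_j)\ne(0,0)\}$ and for $S\subseteq\mathbb{F}_q^{2n}$, $d_s(S)$ is the minimum symplectic weight of a nonzero element of $S$. For an $\mathbb{F}_q$-linear code $D\subseteq\mathbb{F}_q^{2n}$, the EAQECC it gives rise to has parameters $[[n,k(D),d(D);c(D)]]_q$, where $c(D)=\frac12(\dim D-\dim(D\cap D^{\perp_s}))$, $k(D)=n-\dim D+c(D)$ and $d(D)=d_s\big(D^{\perp_s}\setminus(D\cap D^{\perp_s})\big)$. Given $C=\langle B_r\rangle\oplus\langle B_t\rangle$ as in the claim and an invertible $t\times t$ matrix $A$, $D_A\subseteq\mathbb{F}_q^{2n}$ is the $\mathbb{F}_q$-linear code generated by the rows of the matrix $\begin{pmatrix}B_t & AB_t\\ B_r & 0\\ 0 & B_r\end{pmatrix}$ (called a Steane enlargement of the EAQECC determined by $C$). *)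

theory Defs
  imports "Jordan_Normal_Form.Char_Poly" "Jordan_Normal_Form.DL_Rank" "HOL-Library.Extended_Nat"
begin

(* Vectors of F_q^m are 'a vec of dimension m; matrices are 'a mat (Jordan_Normal_Form). *)

(* row space <B>: all F-linear combinations of the rows of B *)
definition rowspace :: "'a::field mat \<Rightarrow> 'a vec set" where
  "rowspace B = {transpose_mat B *\<^sub>v c | c. c \<in> carrier_vec (dim_row B)}"

(* the rows of B are linearly independent *)
definition lin_indep_rows :: "'a::field mat \<Rightarrow> bool" where
  "lin_indep_rows B \<longleftrightarrow>
     (\<forall>c \<in> carrier_vec (dim_row B). transpose_mat B *\<^sub>v c = 0\<^sub>v (dim_col B) \<longrightarrow> c = 0\<^sub>v (dim_row B))"

(* dimension of a subspace W of F^m (library notion of vectorspace dimension) *)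
definition subdim :: "nat \<Rightarrow> 'a::field vec set \<Rightarrow> nat" where
  "subdim m W = vectorspace.dim class_ring ((module_vec TYPE('a) m)\<lparr>carrier := W\<rparr>)"

(* rank of a matrix (library notion) *)
definition mrank :: "'a::field mat \<Rightarrow> nat" where
  "mrank M = vec_space.rank (dim_row M) M"

(* horizontal concatenation (B | C) of two matrices with the same number of rows *)
definition hcat :: "'a::zero mat \<Rightarrow> 'a mat \<Rightarrow> 'a mat" where
  "hcat B C = four_block_mat B C (0\<^sub>m 0 (dim_col B)) (0\<^sub>m 0 (dim_col C))"

(* vertical concatenation: library append_rows *)
abbreviation vcat :: "'a::zero mat \<Rightarrow> 'a mat \<Rightarrow> 'a mat" where
  "vcat B C \<equiv> B @\<^sub>r C"

(* Euclidean dual in F^m *)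
definition edual :: "nat \<Rightarrow> 'a::field vec set \<Rightarrow> 'a vec set" where
  "edual m V = {w \<in> carrier_vec m. \<forall>v \<in> V. v \<bullet> w = 0}"

(* symplectic product on F^(2n): (x|y).(z|w) = x.w - z.y *)
definition symp :: "nat \<Rightarrow> 'a::field vec \<Rightarrow> 'a vec \<Rightarrow> 'a" where
  "symp n u v = vec_first u n \<bullet> vec_last v n - vec_first v n \<bullet> vec_last u n"

(* symplectic dual in F^(2n) *)
definition sdual :: "nat \<Rightarrow> 'a::field vec set \<Rightarrow> 'a vec set" where
  "sdual n D = {w \<in> carrier_vec (2 * n). \<forall>v \<in> D. symp n v w = 0}"

(* Hamming weight *)
definition hwt :: "'a::zero vec \<Rightarrow> nat" where
  "hwt v = card {j. j < dim_vec v \<and> v $ j \<noteq> 0}"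

(* symplectic weight of (x|y) in F^(2n) *)
definition swt :: "nat \<Rightarrow> 'a::zero vec \<Rightarrow> nat" where
  "swt n v = card {j. j < n \<and> (v $ j \<noteq> 0 \<or> v $ (n + j) \<noteq> 0)}"

(* minimum Hamming distance d_H(V) of V \<subseteq> F^m (infinity if V = {0}) *)
definition dH :: "nat \<Rightarrow> 'a::zero vec set \<Rightarrow> enat" where
  "dH m V = (INF v \<in> V - {0\<^sub>v m}. enat (hwt v))"

(* minimum symplectic weight d_s(S) of S \<subseteq> F^(2n) (infinity if no nonzero element) *)
definition ds :: "nat \<Rightarrow> 'a::zero vec set \<Rightarrow> enat" where
  "ds n S = (INF v \<in> S - {0\<^sub>v (2 * n)}. enat (swt n v))"

(* EAQECC parameters of a linear code D \<subseteq> F^(2n) *)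
definition ea_c :: "nat \<Rightarrow> 'a::field vec set \<Rightarrow> real" where
  "ea_c n D = (real (subdim (2 * n) D) - real (subdim (2 * n) (D \<inter> sdual n D))) / 2"

definition ea_k :: "nat \<Rightarrow> 'a::field vec set \<Rightarrow> real" where
  "ea_k n D = real n - real (subdim (2 * n) D) + ea_c n D"

definition ea_d :: "nat \<Rightarrow> 'a::field vec set \<Rightarrow> enat" where
  "ea_d n D = ds n (sdual n D - (D \<inter> sdual n D))"

(* generator matrix of the Steane enlargement D_A *)
definition steane_gen :: "'a::field mat \<Rightarrow> 'a mat \<Rightarrow> 'a mat \<Rightarrow> 'a mat" where
  "steane_gen Br Bt A =
     vcat (hcat Bt (A * Bt))
      (vcat (hcat Br (0\<^sub>m (dim_row Br) (dim_col Br)))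
            (hcat (0\<^sub>m (dim_row Br) (dim_col Br)) Br))"

(* the (t+2r) x (t+2r) matrix whose rank gives 2c' *)
definition steane_M :: "'a::field mat \<Rightarrow> 'a mat \<Rightarrow> 'a mat \<Rightarrow> 'a mat" where
  "steane_M Br Bt A =
    (let r = dim_row Br; t = dim_row Bt in
     vcat (hcat (hcat (Bt * transpose_mat Bt * transpose_mat A - A * Bt * transpose_mat Bt)
                      (- (A * Bt * transpose_mat Br)))
                (Bt * transpose_mat Br))
      (vcat (hcat (hcat (Br * transpose_mat Bt * transpose_mat A) (0\<^sub>m r r))
                  (Br * transpose_mat Br))
            (hcat (hcat (- (Br * transpose_mat Bt)) (- (Br * transpose_mat Br)))
                  (0\<^sub>m r r))))"

end

theory Submission
  imports Defs
begin

lemma finite_carrier_vec: "finite (carrier_vec m :: 'a::finite vec set)"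
proof -
  have "carrier_vec m \<subseteq> vec_of_list ` {xs :: 'a list. set xs \<subseteq> UNIV \<and> length xs = m}"
  proof
    fix v :: "'a vec" assume "v \<in> carrier_vec m"
    then show "v \<in> vec_of_list ` {xs. set xs \<subseteq> UNIV \<and> length xs = m}"
      by (intro image_eqI[of _ _ "list_of_vec v"]) (auto simp: vec_list)
  qed
  moreover have "finite {xs :: 'a list. set xs \<subseteq> UNIV \<and> length xs = m}"
    by (rule finite_lists_length_eq) simp
  ultimately show ?thesis by (metis finite_surj)
qed

lemma vs_fin_dim_finite:
  assumes "vectorspace K V" "finite (carrier V)"
  shows "vectorspace.fin_dim K V"
proof -
  interpret vectorspace K V by fact
  show ?thesis unfolding fin_dim_def
    using span_is_subset2 in_own_span assms(2) by (intro exI[of _ "carrier V"]) auto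
qed

lemma lin_map_mult:
  fixes L :: "'a::field mat"
  assumes L: "L \<in> carrier_mat N m" and K: "subspace class_ring K (module_vec TYPE('a) m)"
  shows "linear_map class_ring ((module_vec TYPE('a) m)\<lparr>carrier := K\<rparr>) (module_vec TYPE('a) N) ((*\<^sub>v) L)"
proof -
  interpret V: vec_space "TYPE('a)" m .
  have vs: "vectorspace class_ring ((module_vec TYPE('a) m)\<lparr>carrier := K\<rparr>)"
    using V.subspace_is_vs[OF K] by simp
  have Ksub: "K \<subseteq> carrier_vec m" using K unfolding subspace_def submodule_def by auto
  show ?thesis
    unfolding linear_map_def mod_hom_def mod_hom_axioms_def module_hom_def
    using vs vec_vs[of N] Ksub L
    by (auto simp: vectorspace_def module_vec_simps class_ring_simps mult_mat_vec
       intro!: mult_add_distrib_mat_vec[OF L])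
qed

lemma subspace_kernel:
  fixes L :: "'a::field mat"
  assumes L: "L \<in> carrier_mat N m" and K: "subspace class_ring K (module_vec TYPE('a) m)"
  shows "subspace class_ring {c \<in> K. L *\<^sub>v c = 0\<^sub>v N} (module_vec TYPE('a) m)"
proof -
  have Ks: "submodule class_ring K (module_vec TYPE('a) m)" using K unfolding subspace_def by auto
  have Ksub: "K \<subseteq> carrier_vec m" using Ks unfolding submodule_def by (auto simp: module_vec_simps)
  have add: "v + w \<in> K" if "v \<in> K" "w \<in> K" for v w
    using Ks that unfolding submodule_def by (auto simp: module_vec_simps)
  have sm: "c \<cdot>\<^sub>v v \<in> K" if "v \<in> K" for c v
    using Ks that unfolding submodule_def by (auto simp: module_vec_simps class_ring_simps)
  have z: "0\<^sub>v m \<in> K"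
    using Ks unfolding submodule_def by (auto simp: module_vec_simps)
  have Kc: "v \<in> carrier_vec m" if "v \<in> K" for v using Ksub that by auto
  have a2: "L *\<^sub>v (v + w) = 0\<^sub>v N" if "v \<in> K" "w \<in> K" "L *\<^sub>v v = 0\<^sub>v N" "L *\<^sub>v w = 0\<^sub>v N" for v w
    using mult_add_distrib_mat_vec[OF L Kc[OF that(1)] Kc[OF that(2)]] that by simp
  have s2: "L *\<^sub>v (c \<cdot>\<^sub>v v) = 0\<^sub>v N" if "v \<in> K" "L *\<^sub>v v = 0\<^sub>v N" for c v
  proof -
    have "c \<cdot>\<^sub>v 0\<^sub>v N = (0\<^sub>v N :: 'a vec)" by (intro eq_vecI) auto
    then show ?thesis using mult_mat_vec[OF L Kc[OF that(1)]] that by simp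
  qed
  show ?thesis
    unfolding subspace_def submodule_def
    using vec_vs[of m] vec_module[of m] Ksub add sm z L a2 s2
    by (auto simp: module_vec_simps class_ring_simps)
qed

lemma subdim_rank_nullity:
  fixes L :: "'a::{finite,field} mat"
  assumes L: "L \<in> carrier_mat N m" and K: "subspace class_ring K (module_vec TYPE('a) m)"
  shows "subdim N ((*\<^sub>v) L ` K) + subdim m {c \<in> K. L *\<^sub>v c = 0\<^sub>v N} = subdim m K"
proof -
  interpret lm: linear_map class_ring "(module_vec TYPE('a) m)\<lparr>carrier := K\<rparr>" "module_vec TYPE('a) N" "(*\<^sub>v) L"
    by (rule lin_map_mult[OF L K])
  interpret V: vec_space "TYPE('a)" m .
  have Ksub: "K \<subseteq> carrier_vec m" using K unfolding subspace_def submodule_def by (auto simp: module_vec_simps)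
  have fd: "lm.V.fin_dim"
    by (rule vs_fin_dim_finite[OF V.subspace_is_vs[OF K]])
       (simp add: finite_subset[OF Ksub finite_carrier_vec])
  from lm.rank_nullity[OF fd] show ?thesis
    unfolding subdim_def lm.im_def lm.ker_def by (simp add: module_vec_simps)
qed

lemma subspace_full: "subspace class_ring (carrier_vec m) (module_vec TYPE('a::field) m)"
  unfolding subspace_def submodule_def using vec_vs[of m] vec_module[of m]
  by (auto simp: module_vec_simps class_ring_simps)

lemma subdim_full: "subdim m (carrier_vec m :: 'a::field vec set) = m"
proof -
  interpret V: vec_space "TYPE('a)" m .
  have "(module_vec TYPE('a) m)\<lparr>carrier := carrier_vec m\<rparr> = module_vec TYPE('a) m"
    by (simp add: module_vec_def)
  then show ?thesis unfolding subdim_def using V.dim_is_n by metis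
qed

lemma zero_set_eq: "{c \<in> carrier_vec m. (1\<^sub>m m :: 'a::field mat) *\<^sub>v c = 0\<^sub>v m} = {0\<^sub>v m}"
  by auto

lemma subdim_zero: "subdim m {0\<^sub>v m :: 'a::{finite,field} vec} = 0"
proof -
  have K: "subspace class_ring {0\<^sub>v m :: 'a vec} (module_vec TYPE('a) m)"
    using subspace_kernel[OF one_carrier_mat subspace_full, of m] unfolding zero_set_eq .
  have "subdim m ((*\<^sub>v) (1\<^sub>m m) ` {0\<^sub>v m :: 'a vec}) + subdim m {c \<in> {0\<^sub>v m}. (1\<^sub>m m :: 'a mat) *\<^sub>v c = 0\<^sub>v m} = subdim m {0\<^sub>v m :: 'a vec}"
    by (rule subdim_rank_nullity[OF one_carrier_mat K])
  moreover have "(*\<^sub>v) (1\<^sub>m m) ` {0\<^sub>v m :: 'a vec} = {0\<^sub>v m}" by auto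
  moreover have "{c \<in> {0\<^sub>v m}. (1\<^sub>m m :: 'a mat) *\<^sub>v c = 0\<^sub>v m} = {0\<^sub>v m}" by auto
  ultimately show ?thesis by simp
qed

lemma mrank_eq:
  fixes M :: "'a::field mat"
  assumes M: "M \<in> carrier_mat m k"
  shows "mrank M = subdim m ((*\<^sub>v) M ` carrier_vec k)"
proof -
  interpret V: vec_space "TYPE('a)" m .
  have "V.span (set (cols M)) = (*\<^sub>v) M ` carrier_vec k"
    using V.col_space_eq[OF M] M unfolding V.col_space_def by auto
  moreover have "mrank M = V.rank M" using M by (simp add: mrank_def)
  ultimately show ?thesis unfolding subdim_def V.rank_def by simp
qed

lemma hcat_carrier: "G1 \<in> carrier_mat m n \<Longrightarrow> G2 \<in> carrier_mat m n' \<Longrightarrow> hcat G1 G2 \<in> carrier_mat m (n + n')"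
  unfolding hcat_def carrier_mat_def by auto

lemma hcat_index: "G1 \<in> carrier_mat m n \<Longrightarrow> G2 \<in> carrier_mat m n' \<Longrightarrow> i < m \<Longrightarrow> j < n + n' \<Longrightarrow>
  hcat G1 G2 $$ (i,j) = (if j < n then G1 $$ (i,j) else G2 $$ (i, j - n))"
  unfolding hcat_def by (subst index_mat_four_block) auto

lemma hcat_first:
  fixes G1 G2 :: "'a::field mat"
  assumes G1: "G1 \<in> carrier_mat m n" and G2: "G2 \<in> carrier_mat m n" and e: "e \<in> carrier_vec m"
  shows "vec_first ((hcat G1 G2)\<^sup>T *\<^sub>v e) n = G1\<^sup>T *\<^sub>v e"
    and "vec_last ((hcat G1 G2)\<^sup>T *\<^sub>v e) n = G2\<^sup>T *\<^sub>v e"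
    and "(hcat G1 G2)\<^sup>T *\<^sub>v e \<in> carrier_vec (2*n)"
proof -
  have H: "hcat G1 G2 \<in> carrier_mat m (n+n)" by (rule hcat_carrier[OF G1 G2])
  show "(hcat G1 G2)\<^sup>T *\<^sub>v e \<in> carrier_vec (2*n)" using H by (intro carrier_vecI) auto
  have c1: "col (hcat G1 G2) i = col G1 i" if "i < n" for i
    by (rule eq_vecI) (use G1 G2 H that in \<open>auto simp: hcat_index\<close>)
  have c2: "col (hcat G1 G2) (n + i) = col G2 i" if "i < n" for i
    by (rule eq_vecI) (use G1 G2 H that in \<open>auto simp: hcat_index\<close>)
  show "vec_first ((hcat G1 G2)\<^sup>T *\<^sub>v e) n = G1\<^sup>T *\<^sub>v e"
    by (rule eq_vecI) (use G1 G2 H in \<open>auto simp: vec_first_def c1\<close>)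
  show "vec_last ((hcat G1 G2)\<^sup>T *\<^sub>v e) n = G2\<^sup>T *\<^sub>v e"
    by (rule eq_vecI) (use G1 G2 H in \<open>auto simp: vec_last_def c2\<close>)
qed

lemma symp_gen:
  fixes G1 G2 :: "'a::field mat"
  assumes G1: "G1 \<in> carrier_mat m n" and G2: "G2 \<in> carrier_mat m n" and e: "e \<in> carrier_vec m"
    and w: "w \<in> carrier_vec (2*n)"
  shows "symp n ((hcat G1 G2)\<^sup>T *\<^sub>v e) w = e \<bullet> (G1 *\<^sub>v vec_last w n - G2 *\<^sub>v vec_first w n)"
proof -
  have "symp n ((hcat G1 G2)\<^sup>T *\<^sub>v e) w = (G1\<^sup>T *\<^sub>v e) \<bullet> vec_last w n - vec_first w n \<bullet> (G2\<^sup>T *\<^sub>v e)"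
    unfolding symp_def hcat_first[OF G1 G2 e] ..
  also have "vec_first w n \<bullet> (G2\<^sup>T *\<^sub>v e) = (G2\<^sup>T *\<^sub>v e) \<bullet> vec_first w n"
    by (rule comm_scalar_prod[of _ n]) (use G2 in \<open>auto intro!: carrier_vecI\<close>)
  also have "(G2\<^sup>T *\<^sub>v e) \<bullet> vec_first w n = e \<bullet> (G2 *\<^sub>v vec_first w n)"
    by (rule transpose_vec_mult_scalar[OF G2 _ e]) simp
  also have "(G1\<^sup>T *\<^sub>v e) \<bullet> vec_last w n = e \<bullet> (G1 *\<^sub>v vec_last w n)"
    by (rule transpose_vec_mult_scalar[OF G1 _ e]) simp
  finally show ?thesis
    by (subst scalar_prod_minus_distrib[OF e]) (use G1 G2 in auto)
qed

lemma rowspace_hcat: "G1 \<in> carrier_mat m n \<Longrightarrow> G2 \<in> carrier_mat m n \<Longrightarrow>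
  rowspace (hcat G1 G2) = {(hcat G1 G2)\<^sup>T *\<^sub>v c | c. c \<in> carrier_vec m}"
  unfolding rowspace_def using hcat_carrier[of G1 m n G2 n] by auto

lemma sdual_char:
  fixes G1 G2 :: "'a::field mat"
  assumes G1: "G1 \<in> carrier_mat m n" and G2: "G2 \<in> carrier_mat m n"
    and w: "w \<in> carrier_vec (2*n)"
  shows "(\<forall>x\<in>rowspace (hcat G1 G2). symp n x w = 0) \<longleftrightarrow> G1 *\<^sub>v vec_last w n = G2 *\<^sub>v vec_first w n"
proof
  assume "G1 *\<^sub>v vec_last w n = G2 *\<^sub>v vec_first w n"
  then have z: "G1 *\<^sub>v vec_last w n - G2 *\<^sub>v vec_first w n = 0\<^sub>v m" using G2
    by (metis carrier_matD(1) dim_mult_mat_vec minus_cancel_vec carrier_vec_dim_vec)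
  show "\<forall>x\<in>rowspace (hcat G1 G2). symp n x w = 0"
    unfolding rowspace_hcat[OF G1 G2] using symp_gen[OF G1 G2 _ w] z by auto
next
  assume H: "\<forall>x\<in>rowspace (hcat G1 G2). symp n x w = 0"
  show "G1 *\<^sub>v vec_last w n = G2 *\<^sub>v vec_first w n"
  proof (rule eq_vecI)
    fix i assume i: "i < dim_vec (G2 *\<^sub>v vec_first w n)"
    then have im: "i < m" using G2 by auto
    have "symp n ((hcat G1 G2)\<^sup>T *\<^sub>v unit_vec m i) w = 0"
      using H unit_vec_carrier[of m i] unfolding rowspace_hcat[OF G1 G2] by blast
    then have "unit_vec m i \<bullet> (G1 *\<^sub>v vec_last w n - G2 *\<^sub>v vec_first w n) = 0"
      using symp_gen[OF G1 G2 _ w, of "unit_vec m i"] by simp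
    then have "(G1 *\<^sub>v vec_last w n - G2 *\<^sub>v vec_first w n) $ i = 0"
      using im G1 G2 by (subst (asm) scalar_prod_left_unit) auto
    then show "(G1 *\<^sub>v vec_last w n) $ i = (G2 *\<^sub>v vec_first w n) $ i" using im G1 G2 by auto
  qed (use G1 G2 in auto)
qed

lemma vcat_dims[simp]: "dim_row (X @\<^sub>r Y) = dim_row X + dim_row Y" "dim_col (X @\<^sub>r Y) = dim_col X"
  unfolding append_rows_def by auto

lemma hcat_dims[simp]: "dim_row (hcat X Y) = dim_row X" "dim_col (hcat X Y) = dim_col X + dim_col Y"
  unfolding hcat_def by auto

lemma vcat_index'[simp]: "i < dim_row X + dim_row Y \<Longrightarrow> j < dim_col X \<Longrightarrow>
  (X @\<^sub>r Y) $$ (i,j) = (if i < dim_row X then X $$ (i,j) else Y $$ (i - dim_row X, j))"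
  unfolding append_rows_def by (subst index_mat_four_block) auto

lemma hcat_index'[simp]: "i < dim_row X \<Longrightarrow> j < dim_col X + dim_col Y \<Longrightarrow>
  hcat X Y $$ (i,j) = (if j < dim_col X then X $$ (i,j) else Y $$ (i, j - dim_col X))"
  unfolding hcat_def by (subst index_mat_four_block) auto

lemma vcat_index: "X \<in> carrier_mat nx k \<Longrightarrow> Y \<in> carrier_mat ny k \<Longrightarrow> i < nx + ny \<Longrightarrow> j < k \<Longrightarrow>
  (X @\<^sub>r Y) $$ (i,j) = (if i < nx then X $$ (i,j) else Y $$ (i - nx, j))"
  unfolding append_rows_def by (subst index_mat_four_block) auto

lemma vcat_row: "X \<in> carrier_mat nx k \<Longrightarrow> Y \<in> carrier_mat ny k \<Longrightarrow> i < nx + ny \<Longrightarrow>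
  row (X @\<^sub>r Y) i = (if i < nx then row X i else row Y (i - nx))"
  by (rule eq_vecI) (auto simp: vcat_index)

lemma vcat_mult_vec:
  assumes X: "X \<in> carrier_mat nx k" and Y: "Y \<in> carrier_mat ny k"
  shows "(X @\<^sub>r Y) *\<^sub>v v = (X *\<^sub>v v) @\<^sub>v (Y *\<^sub>v v)"
  by (rule eq_vecI) (use X Y in \<open>auto simp: vcat_row\<close>)

lemma vcat_transpose_mult:
  fixes X Y :: "'a::field mat"
  assumes X: "X \<in> carrier_mat nx k" and Y: "Y \<in> carrier_mat ny k" and c: "c \<in> carrier_vec (nx + ny)"
  shows "(X @\<^sub>r Y)\<^sup>T *\<^sub>v c = X\<^sup>T *\<^sub>v vec_first c nx + Y\<^sup>T *\<^sub>v vec_last c ny"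
proof (rule eq_vecI)
  fix j assume "j < dim_vec (X\<^sup>T *\<^sub>v vec_first c nx + Y\<^sup>T *\<^sub>v vec_last c ny)"
  then have j: "j < k" using X Y by auto
  have col: "col (X @\<^sub>r Y) j = col X j @\<^sub>v col Y j"
    by (rule eq_vecI) (use X Y j in \<open>auto simp: vcat_index\<close>)
  have cc: "c = vec_first c nx @\<^sub>v vec_last c ny" using c by simp
  have "((X @\<^sub>r Y)\<^sup>T *\<^sub>v c) $ j = col (X @\<^sub>r Y) j \<bullet> c" using X Y j by auto
  also have "\<dots> = (col X j @\<^sub>v col Y j) \<bullet> (vec_first c nx @\<^sub>v vec_last c ny)"
    using col cc by simp
  also have "\<dots> = col X j \<bullet> vec_first c nx + col Y j \<bullet> vec_last c ny"
    by (rule scalar_prod_append[of _ nx _ ny]) (use X Y j in auto)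
  also have "\<dots> = (X\<^sup>T *\<^sub>v vec_first c nx + Y\<^sup>T *\<^sub>v vec_last c ny) $ j" using X Y j by auto
  finally show "((X @\<^sub>r Y)\<^sup>T *\<^sub>v c) $ j = (X\<^sup>T *\<^sub>v vec_first c nx + Y\<^sup>T *\<^sub>v vec_last c ny) $ j" .
qed (use X Y in auto)

lemma steane_gen_eq:
  fixes Br Bt A :: "'a::field mat"
  assumes Br: "Br \<in> carrier_mat r n" and Bt: "Bt \<in> carrier_mat t n" and A: "A \<in> carrier_mat t t"
  shows "steane_gen Br Bt A = hcat (Bt @\<^sub>r (Br @\<^sub>r 0\<^sub>m r n)) ((A * Bt) @\<^sub>r (0\<^sub>m r n @\<^sub>r Br))"
proof -
  have ABt: "A * Bt \<in> carrier_mat t n" using A Bt by auto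
  have c1: "Bt @\<^sub>r (Br @\<^sub>r 0\<^sub>m r n) \<in> carrier_mat (t + (r + r)) n" using Br Bt by auto
  have c2: "(A * Bt) @\<^sub>r (0\<^sub>m r n @\<^sub>r Br) \<in> carrier_mat (t + (r + r)) n" using Br ABt by auto
  have h1: "hcat Bt (A * Bt) \<in> carrier_mat t (n + n)" by (rule hcat_carrier[OF Bt ABt])
  have h2: "hcat Br (0\<^sub>m r n) \<in> carrier_mat r (n + n)" by (rule hcat_carrier[OF Br]) auto
  have h3: "hcat (0\<^sub>m r n) Br \<in> carrier_mat r (n + n)" by (rule hcat_carrier[OF _ Br]) auto
  have hh: "hcat (Bt @\<^sub>r (Br @\<^sub>r 0\<^sub>m r n)) ((A * Bt) @\<^sub>r (0\<^sub>m r n @\<^sub>r Br)) \<in> carrier_mat (t + (r + r)) (n + n)"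
    by (rule hcat_carrier[OF c1 c2])
  show ?thesis unfolding steane_gen_def
  proof (rule eq_matI)
    fix i j assume "i < dim_row (hcat (Bt @\<^sub>r (Br @\<^sub>r 0\<^sub>m r n)) ((A * Bt) @\<^sub>r (0\<^sub>m r n @\<^sub>r Br)))"
      "j < dim_col (hcat (Bt @\<^sub>r (Br @\<^sub>r 0\<^sub>m r n)) ((A * Bt) @\<^sub>r (0\<^sub>m r n @\<^sub>r Br)))"
    then have i: "i < t + (r + r)" and j: "j < n + n" using hh by auto
    show "(hcat Bt (A * Bt) @\<^sub>r hcat Br (0\<^sub>m (dim_row Br) (dim_col Br)) @\<^sub>r hcat (0\<^sub>m (dim_row Br) (dim_col Br)) Br) $$ (i, j) =
      hcat (Bt @\<^sub>r Br @\<^sub>r 0\<^sub>m r n) (A * Bt @\<^sub>r 0\<^sub>m r n @\<^sub>r Br) $$ (i, j)"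
      using Br Bt ABt A i j
      by (cases "i < t"; cases "i < t + r"; cases "j < n") (simp_all)
  qed (use hh Br Bt ABt h1 h2 h3 in auto)
qed

lemma row_vcat3:
  assumes X: "X \<in> carrier_mat t n" and Y: "Y \<in> carrier_mat r n" and Z: "Z \<in> carrier_mat r n" and i: "i < t + (r + r)"
  shows "row (X @\<^sub>r (Y @\<^sub>r Z)) i = (if i < t then row X i else if i < t + r then row Y (i - t) else row Z (i - t - r))"
  by (rule eq_vecI) (use X Y Z i in auto)

lemma row_zero_mat: "k < r \<Longrightarrow> row (0\<^sub>m r n) k = 0\<^sub>v n"
  by (rule eq_vecI) auto

lemma steane_M_eq:
  fixes Br Bt A :: "'a::field mat"
  assumes Br: "Br \<in> carrier_mat r n" and Bt: "Bt \<in> carrier_mat t n" and A: "A \<in> carrier_mat t t"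
  defines "G1 \<equiv> Bt @\<^sub>r (Br @\<^sub>r 0\<^sub>m r n)" and "G2 \<equiv> (A * Bt) @\<^sub>r (0\<^sub>m r n @\<^sub>r Br)"
  shows "steane_M Br Bt A = G1 * G2\<^sup>T - G2 * G1\<^sup>T"
proof -
  have ABt: "A * Bt \<in> carrier_mat t n" using A Bt by auto
  have G1: "G1 \<in> carrier_mat (t + (r + r)) n" unfolding G1_def using Br Bt by auto
  have G2: "G2 \<in> carrier_mat (t + (r + r)) n" unfolding G2_def using Br ABt by auto
  have e1: "Bt * Bt\<^sup>T * A\<^sup>T = Bt * (A * Bt)\<^sup>T"
    using Bt A by (simp add: transpose_mult[OF A Bt] assoc_mult_mat[of Bt t n "Bt\<^sup>T" t "A\<^sup>T" t])
  have e2: "Br * Bt\<^sup>T * A\<^sup>T = Br * (A * Bt)\<^sup>T"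
    using Bt A Br by (simp add: transpose_mult[OF A Bt] assoc_mult_mat[of Br r n "Bt\<^sup>T" t "A\<^sup>T" t])
  have rG1: "row G1 i = (if i < t then row Bt i else if i < t + r then row Br (i - t) else 0\<^sub>v n)"
    if "i < t + (r + r)" for i
    unfolding G1_def using row_vcat3[OF Bt Br _ that, of "0\<^sub>m r n"] that by (auto simp: row_zero_mat)
  have rG2: "row G2 i = (if i < t then row (A * Bt) i else if i < t + r then 0\<^sub>v n else row Br (i - t - r))"
    if "i < t + (r + r)" for i
    unfolding G2_def using row_vcat3[OF ABt _ Br that, of "0\<^sub>m r n"] that by (auto simp: row_zero_mat)
  have cr: "row X i \<in> carrier_vec n" if "X \<in> carrier_mat k n" for X :: "'a mat" and k i
    using that by auto
  have dM: "dim_row (steane_M Br Bt A) = t + (r + r)" "dim_col (steane_M Br Bt A) = t + (r + r)"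
    unfolding steane_M_def Let_def using Br Bt A by auto
  show ?thesis
  proof (rule eq_matI)
    fix i j assume "i < dim_row (G1 * G2\<^sup>T - G2 * G1\<^sup>T)" "j < dim_col (G1 * G2\<^sup>T - G2 * G1\<^sup>T)"
    then have i: "i < t + (r + r)" and j: "j < t + (r + r)" using G1 G2 by auto
    have R: "(G1 * G2\<^sup>T - G2 * G1\<^sup>T) $$ (i,j) = row G1 i \<bullet> row G2 j - row G2 i \<bullet> row G1 j"
      using G1 G2 i j by simp
    show "steane_M Br Bt A $$ (i,j) = (G1 * G2\<^sup>T - G2 * G1\<^sup>T) $$ (i,j)"
    proof -
      define AB where "AB = A * Bt"
      have AB: "AB \<in> carrier_mat t n" unfolding AB_def by (rule ABt)
      have rG2': "row G2 i = (if i < t then row AB i else if i < t + r then 0\<^sub>v n else row Br (i - t - r))"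
        if "i < t + (r + r)" for i using rG2[OF that] unfolding AB_def .
      show ?thesis
        unfolding R steane_M_def Let_def e1 e2 rG1[OF i] rG1[OF j] rG2'[OF i] rG2'[OF j]
        unfolding AB_def[symmetric] using i j Br Bt AB
        by (cases "i < t"; cases "i < t + r"; cases "j < t"; cases "j < t + r")
           (auto simp: cr)
    qed
  qed (use G1 G2 dM in auto)
qed

lemma vec_eq_minus_zero:
  fixes a b :: "'a::ab_group_add vec"
  assumes "a \<in> carrier_vec m" "b \<in> carrier_vec m"
  shows "(a = b) \<longleftrightarrow> a - b = 0\<^sub>v m"
proof
  assume "a - b = 0\<^sub>v m"
  then have "\<forall>i<m. (a - b) $ i = 0" by auto
  then show "a = b" using assms by (intro eq_vecI) auto
qed (use assms in \<open>auto intro!: eq_vecI\<close>)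

lemma gram:
  fixes G1 G2 :: "'a::field mat"
  assumes G1: "G1 \<in> carrier_mat m n" and G2: "G2 \<in> carrier_mat m n" and c: "c \<in> carrier_vec m"
  shows "G1 *\<^sub>v vec_last ((hcat G1 G2)\<^sup>T *\<^sub>v c) n - G2 *\<^sub>v vec_first ((hcat G1 G2)\<^sup>T *\<^sub>v c) n
       = (G1 * G2\<^sup>T - G2 * G1\<^sup>T) *\<^sub>v c"
proof -
  have "(G1 * G2\<^sup>T - G2 * G1\<^sup>T) *\<^sub>v c = (G1 * G2\<^sup>T) *\<^sub>v c - (G2 * G1\<^sup>T) *\<^sub>v c"
    by (rule minus_mult_distrib_mat_vec[of _ m m]) (use G1 G2 c in auto)
  also have "\<dots> = G1 *\<^sub>v (G2\<^sup>T *\<^sub>v c) - G2 *\<^sub>v (G1\<^sup>T *\<^sub>v c)"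
    using G1 G2 c by (simp add: assoc_mult_mat_vec[of _ m n _ m])
  finally show ?thesis unfolding hcat_first[OF G1 G2 c] by simp
qed

lemma inter_char:
  fixes G1 G2 :: "'a::field mat"
  assumes G1: "G1 \<in> carrier_mat m n" and G2: "G2 \<in> carrier_mat m n"
  shows "rowspace (hcat G1 G2) \<inter> sdual n (rowspace (hcat G1 G2))
       = (*\<^sub>v) (hcat G1 G2)\<^sup>T ` {c \<in> carrier_vec m. (G1 * G2\<^sup>T - G2 * G1\<^sup>T) *\<^sub>v c = 0\<^sub>v m}"
proof -
  have key: "(hcat G1 G2)\<^sup>T *\<^sub>v c \<in> sdual n (rowspace (hcat G1 G2)) \<longleftrightarrow> (G1 * G2\<^sup>T - G2 * G1\<^sup>T) *\<^sub>v c = 0\<^sub>v m"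
    if c: "c \<in> carrier_vec m" for c
  proof -
    let ?w = "(hcat G1 G2)\<^sup>T *\<^sub>v c"
    have w: "?w \<in> carrier_vec (2*n)" by (rule hcat_first(3)[OF G1 G2 c])
    have "?w \<in> sdual n (rowspace (hcat G1 G2)) \<longleftrightarrow> G1 *\<^sub>v vec_last ?w n = G2 *\<^sub>v vec_first ?w n"
      unfolding sdual_def using sdual_char[OF G1 G2 w] w by auto
    also have "\<dots> \<longleftrightarrow> G1 *\<^sub>v vec_last ?w n - G2 *\<^sub>v vec_first ?w n = 0\<^sub>v m"
      by (rule vec_eq_minus_zero) (use G1 G2 in auto)
    also have "\<dots> \<longleftrightarrow> (G1 * G2\<^sup>T - G2 * G1\<^sup>T) *\<^sub>v c = 0\<^sub>v m" unfolding gram[OF G1 G2 c] ..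
    finally show ?thesis .
  qed
  define S where "S = sdual n (rowspace (hcat G1 G2))"
  have key': "(hcat G1 G2)\<^sup>T *\<^sub>v c \<in> S \<longleftrightarrow> (G1 * G2\<^sup>T - G2 * G1\<^sup>T) *\<^sub>v c = 0\<^sub>v m"
    if "c \<in> carrier_vec m" for c using key[OF that] unfolding S_def .
  have "rowspace (hcat G1 G2) \<inter> S = (*\<^sub>v) (hcat G1 G2)\<^sup>T ` {c \<in> carrier_vec m. (G1 * G2\<^sup>T - G2 * G1\<^sup>T) *\<^sub>v c = 0\<^sub>v m}"
    unfolding rowspace_hcat[OF G1 G2] using key' by auto
  then show ?thesis unfolding S_def .
qed

lemma zero_mult_vec': "v \<in> carrier_vec n \<Longrightarrow> (0\<^sub>m r n :: 'a::field mat) *\<^sub>v v = 0\<^sub>v r"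
  by (rule eq_vecI) auto

lemma zero_T_mult_vec': "v \<in> carrier_vec r \<Longrightarrow> (0\<^sub>m r n :: 'a::field mat)\<^sup>T *\<^sub>v v = 0\<^sub>v n"
  by (rule eq_vecI) auto

lemma T_mult_zero: "M \<in> carrier_mat t n \<Longrightarrow> (M :: 'a::field mat)\<^sup>T *\<^sub>v 0\<^sub>v t = 0\<^sub>v n"
proof (rule eq_vecI)
  fix i assume M: "M \<in> carrier_mat t n" and "i < dim_vec (0\<^sub>v n :: 'a vec)"
  then have i: "i < n" by simp
  have "col M i \<in> carrier_vec t" using M by (intro carrier_vecI) auto
  then show "(M\<^sup>T *\<^sub>v 0\<^sub>v t) $ i = (0\<^sub>v n :: 'a vec) $ i" using M i by simp
qed auto

lemma dual_cond:
  fixes Br Bt A :: "'a::field mat"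
  assumes Br: "Br \<in> carrier_mat r n" and Bt: "Bt \<in> carrier_mat t n" and A: "A \<in> carrier_mat t t"
    and w: "w \<in> sdual n (rowspace (steane_gen Br Bt A))"
  shows "Bt *\<^sub>v vec_last w n = (A * Bt) *\<^sub>v vec_first w n \<and> Br *\<^sub>v vec_last w n = 0\<^sub>v r
     \<and> Br *\<^sub>v vec_first w n = 0\<^sub>v r"
proof -
  have ABt: "A * Bt \<in> carrier_mat t n" using A Bt by auto
  have G1: "Bt @\<^sub>r (Br @\<^sub>r 0\<^sub>m r n) \<in> carrier_mat (t + (r + r)) n" using Br Bt by auto
  have G2: "(A * Bt) @\<^sub>r (0\<^sub>m r n @\<^sub>r Br) \<in> carrier_mat (t + (r + r)) n" using Br ABt by auto
  have wc: "w \<in> carrier_vec (2*n)" using w unfolding sdual_def by auto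
  have "(Bt @\<^sub>r (Br @\<^sub>r 0\<^sub>m r n)) *\<^sub>v vec_last w n = ((A * Bt) @\<^sub>r (0\<^sub>m r n @\<^sub>r Br)) *\<^sub>v vec_first w n"
    using sdual_char[OF G1 G2 wc] w unfolding sdual_def steane_gen_eq[OF Br Bt A] by auto
  then have "(Bt *\<^sub>v vec_last w n) @\<^sub>v ((Br *\<^sub>v vec_last w n) @\<^sub>v (0\<^sub>m r n *\<^sub>v vec_last w n))
     = ((A * Bt) *\<^sub>v vec_first w n) @\<^sub>v ((0\<^sub>m r n *\<^sub>v vec_first w n) @\<^sub>v (Br *\<^sub>v vec_first w n))"
    using vcat_mult_vec[OF Bt carrier_append_rows[OF Br zero_carrier_mat]]
      vcat_mult_vec[OF Br zero_carrier_mat] vcat_mult_vec[OF ABt carrier_append_rows[OF zero_carrier_mat Br]]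
      vcat_mult_vec[OF zero_carrier_mat Br] by metis
  then show ?thesis
    using Br Bt ABt by (simp add: append_vec_eq[of _ t] append_vec_eq[of _ r] zero_mult_vec')
qed

lemma indep:
  fixes Br Bt A :: "'a::field mat"
  assumes Br: "Br \<in> carrier_mat r n" and Bt: "Bt \<in> carrier_mat t n" and A: "A \<in> carrier_mat t t"
    and iBr: "lin_indep_rows Br" and iBt: "lin_indep_rows Bt"
    and disj: "rowspace Br \<inter> rowspace Bt = {0\<^sub>v n}"
    and c: "c \<in> carrier_vec (t + (r + r))"
    and z: "(steane_gen Br Bt A)\<^sup>T *\<^sub>v c = 0\<^sub>v (n + n)"
  shows "c = 0\<^sub>v (t + (r + r))"
proof -
  have ABt: "A * Bt \<in> carrier_mat t n" using A Bt by auto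
  have Z: "0\<^sub>m r n \<in> carrier_mat r n" by auto
  have G1: "Bt @\<^sub>r (Br @\<^sub>r 0\<^sub>m r n) \<in> carrier_mat (t + (r + r)) n" using Br Bt by auto
  have G2: "(A * Bt) @\<^sub>r (0\<^sub>m r n @\<^sub>r Br) \<in> carrier_mat (t + (r + r)) n" using Br ABt by auto
  define a where "a = vec_first c t"
  define c' where "c' = vec_last c (r + r)"
  define b where "b = vec_first c' r"
  define d where "d = vec_last c' r"
  have a: "a \<in> carrier_vec t" and b: "b \<in> carrier_vec r" and d: "d \<in> carrier_vec r" and c': "c' \<in> carrier_vec (r + r)"
    unfolding a_def b_def d_def c'_def by auto
  have ceq: "c = a @\<^sub>v (b @\<^sub>v d)" unfolding a_def b_def d_def c'_def using c by simp
  have vf0: "vec_first (0\<^sub>v (n + n)) n = (0\<^sub>v n :: 'a vec)" by (rule eq_vecI) (auto simp: vec_first_def)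
  have vl0: "vec_last (0\<^sub>v (n + n)) n = (0\<^sub>v n :: 'a vec)" by (rule eq_vecI) (auto simp: vec_last_def)
  have z1: "(Bt @\<^sub>r (Br @\<^sub>r 0\<^sub>m r n))\<^sup>T *\<^sub>v c = 0\<^sub>v n"
    using hcat_first(1)[OF G1 G2 c] z vf0 unfolding steane_gen_eq[OF Br Bt A] by simp
  have z2: "((A * Bt) @\<^sub>r (0\<^sub>m r n @\<^sub>r Br))\<^sup>T *\<^sub>v c = 0\<^sub>v n"
    using hcat_first(2)[OF G1 G2 c] z vl0 unfolding steane_gen_eq[OF Br Bt A] by simp
  have e1: "(Bt @\<^sub>r (Br @\<^sub>r 0\<^sub>m r n))\<^sup>T *\<^sub>v c = Bt\<^sup>T *\<^sub>v a + Br\<^sup>T *\<^sub>v b"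
    unfolding vcat_transpose_mult[OF Bt carrier_append_rows[OF Br Z] c]
      vcat_transpose_mult[OF Br Z c'] a_def[symmetric] c'_def[symmetric] b_def[symmetric] d_def[symmetric]
      zero_T_mult_vec'[OF d]
    using Br b by simp
  have e2: "((A * Bt) @\<^sub>r (0\<^sub>m r n @\<^sub>r Br))\<^sup>T *\<^sub>v c = (A * Bt)\<^sup>T *\<^sub>v a + Br\<^sup>T *\<^sub>v d"
    unfolding vcat_transpose_mult[OF ABt carrier_append_rows[OF Z Br] c]
      vcat_transpose_mult[OF Z Br c'] a_def[symmetric] c'_def[symmetric] b_def[symmetric] d_def[symmetric]
      zero_T_mult_vec'[OF b]
    using Br d by simp
  define x where "x = Bt\<^sup>T *\<^sub>v a"
  define y where "y = Br\<^sup>T *\<^sub>v b"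
  have x: "x \<in> carrier_vec n" and y: "y \<in> carrier_vec n" unfolding x_def y_def using Bt Br by (auto intro!: carrier_vecI)
  have xy: "x + y = 0\<^sub>v n" using z1 e1 unfolding x_def y_def by simp
  have xy': "x = (-1) \<cdot>\<^sub>v y"
  proof (rule eq_vecI)
    fix i assume "i < dim_vec ((-1) \<cdot>\<^sub>v y)"
    then have i: "i < n" using y by auto
    have "(x + y) $ i = 0" using xy i by simp
    then show "x $ i = ((-1) \<cdot>\<^sub>v y) $ i" using x y i by (simp add: eq_neg_iff_add_eq_0)
  qed (use x y in auto)
  have "x \<in> rowspace Br"
    unfolding rowspace_def xy' y_def using Br b
    by (intro CollectI exI[of _ "(-1) \<cdot>\<^sub>v b"]) (auto simp: mult_mat_vec[of _ n r])
  moreover have "x \<in> rowspace Bt" unfolding rowspace_def x_def using Bt a by auto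
  ultimately have x0: "x = 0\<^sub>v n" using disj by auto
  have a0: "a = 0\<^sub>v t" using iBt a x0 Bt unfolding lin_indep_rows_def x_def by auto
  have "y = 0\<^sub>v n" using xy x0 y by simp
  then have b0: "b = 0\<^sub>v r" using iBr b Br unfolding lin_indep_rows_def y_def by auto
  have "(A * Bt)\<^sup>T *\<^sub>v a = 0\<^sub>v n" unfolding a0 using T_mult_zero[OF ABt] .
  then have "Br\<^sup>T *\<^sub>v d = 0\<^sub>v n" using z2 e2 Br d by simp
  then have d0: "d = 0\<^sub>v r" using iBr d Br unfolding lin_indep_rows_def by auto
  show ?thesis unfolding ceq a0 b0 d0 by (rule eq_vecI) auto
qed

lemma card_filter_sum: "card {j. j < (n::nat) \<and> P j} = (\<Sum>j<n. if P j then 1 else (0::nat))"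
proof -
  have "{j. j < n \<and> P j} = {j \<in> {..<n}. P j}" by auto
  then have "card {j. j < n \<and> P j} = (\<Sum>j\<in>{j \<in> {..<n}. P j}. 1)" by simp
  also have "\<dots> = (\<Sum>j<n. if P j then 1 else 0)" by (rule sum.inter_filter) simp_all
  finally show ?thesis .
qed

lemma hwt_sum: "x \<in> carrier_vec n \<Longrightarrow> hwt x = (\<Sum>j<n. if x $ j \<noteq> 0 then 1 else (0::nat))"
  unfolding hwt_def by (simp add: card_filter_sum)

lemma coord_count:
  fixes a b :: "'a::{finite,field}"
  shows "(\<Sum>l\<in>UNIV. if a + l * b \<noteq> 0 then 1 else (0::nat)) + (if b \<noteq> 0 then 1 else 0)
       = card (UNIV :: 'a set) * (if b \<noteq> 0 \<or> a \<noteq> 0 then 1 else 0)"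
proof (cases "b = 0")
  case True
  then show ?thesis by simp
next
  case False
  have "{l. a + l * b \<noteq> 0} = UNIV - {- a / b}"
    using False by (auto simp: field_simps add_eq_0_iff)
  then have "card {l. a + l * b \<noteq> 0} = card (UNIV :: 'a set) - 1" by (simp add: card_Diff_subset)
  moreover have "(\<Sum>l\<in>UNIV. if a + l * b \<noteq> 0 then 1 else (0::nat)) = card {l. a + l * b \<noteq> 0}"
    using card_filter_sum by (simp add: sum.If_cases)
  moreover have "card (UNIV :: 'a set) \<ge> 1" by (simp add: Suc_leI finite_UNIV_card_ge_0)
  ultimately show ?thesis using False by simp
qed

lemma count_lemma:
  fixes u v :: "'a::{finite,field} vec"
  assumes u: "u \<in> carrier_vec n" and v: "v \<in> carrier_vec n"
  shows "(\<Sum>l\<in>UNIV. hwt (v + l \<cdot>\<^sub>v u)) + hwt u = card (UNIV :: 'a set) * card {j. j < n \<and> (u $ j \<noteq> 0 \<or> v $ j \<noteq> 0)}"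
proof -
  have "(\<Sum>l\<in>UNIV. hwt (v + l \<cdot>\<^sub>v u)) = (\<Sum>l\<in>UNIV. \<Sum>j<n. if v $ j + l * u $ j \<noteq> 0 then 1 else (0::nat))"
    by (rule sum.cong) (use u v in \<open>auto simp: hwt_sum[of _ n]\<close>)
  also have "\<dots> = (\<Sum>j<n. \<Sum>l\<in>UNIV. if v $ j + l * u $ j \<noteq> 0 then 1 else (0::nat))"
    by (rule sum.swap)
  finally have "(\<Sum>l\<in>UNIV. hwt (v + l \<cdot>\<^sub>v u)) + hwt u
     = (\<Sum>j<n. (\<Sum>l\<in>UNIV. if v $ j + l * u $ j \<noteq> 0 then 1 else (0::nat)) + (if u $ j \<noteq> 0 then 1 else 0))"
    using u by (simp add: hwt_sum[OF u] sum.distrib)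
  also have "\<dots> = (\<Sum>j<n. card (UNIV :: 'a set) * (if u $ j \<noteq> 0 \<or> v $ j \<noteq> 0 then 1 else 0))"
    by (rule sum.cong) (simp_all add: coord_count)
  also have "\<dots> = card (UNIV :: 'a set) * card {j. j < n \<and> (u $ j \<noteq> 0 \<or> v $ j \<noteq> 0)}"
    by (simp add: card_filter_sum sum_distrib_left)
  finally show ?thesis .
qed

lemma ceil_bound:
  fixes q k s :: nat
  assumes q: "q \<ge> 1" and h: "(q + 1) * k \<le> q * s"
  shows "nat \<lceil>(1 + 1 / real q) * real k\<rceil> \<le> s"
proof -
  have "(1 + 1 / real q) * real k = real ((q + 1) * k) / real q" using q by (simp add: field_simps)
  also have "\<dots> \<le> real (q * s) / real q"
  proof -
    have "real ((q + 1) * k) \<le> real (q * s)" using h by (simp only: of_nat_le_iff)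
    then show ?thesis by (intro divide_right_mono) simp_all
  qed
  also have "\<dots> = real s" using q by simp
  finally have "\<lceil>(1 + 1 / real q) * real k\<rceil> \<le> int s" by (simp add: ceiling_le_iff)
  then show ?thesis by (metis nat_int nat_mono)
qed

lemma dH_le: "x \<in> E \<Longrightarrow> x \<noteq> 0\<^sub>v n \<Longrightarrow> the_enat (dH n E) \<le> hwt x \<and> dH n E \<le> enat (hwt x)"
proof -
  assume x: "x \<in> E" "x \<noteq> 0\<^sub>v n"
  have le: "dH n E \<le> enat (hwt x)" unfolding dH_def using x by (intro INF_lower2[of x]) auto
  then obtain k where "dH n E = enat k" "k \<le> hwt x" by (cases "dH n E") auto
  then show ?thesis using le by simp
qed

lemma weight_bound2:
  fixes u v :: "'a::{finite,field} vec"
  assumes u: "u \<in> carrier_vec n" and v: "v \<in> carrier_vec n" and uE: "u \<in> E" and u0: "u \<noteq> 0\<^sub>v n"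
    and vE: "\<And>l. v + l \<cdot>\<^sub>v u \<in> E \<and> v + l \<cdot>\<^sub>v u \<noteq> 0\<^sub>v n"
  shows "nat \<lceil>(1 + 1 / real (card (UNIV :: 'a set))) * real (the_enat (dH n E))\<rceil>
          \<le> card {j. j < n \<and> (u $ j \<noteq> 0 \<or> v $ j \<noteq> 0)}"
proof -
  let ?q = "card (UNIV :: 'a set)"
  let ?k = "the_enat (dH n E)"
  have q: "?q \<ge> 1" by (simp add: Suc_leI finite_UNIV_card_ge_0)
  have "(\<Sum>l\<in>(UNIV :: 'a set). ?k) \<le> (\<Sum>l\<in>UNIV. hwt (v + l \<cdot>\<^sub>v u))"
    by (rule sum_mono) (use dH_le vE in blast)
  moreover have "?k \<le> hwt u" using dH_le[OF uE u0] by blast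
  ultimately have "(?q + 1) * ?k \<le> ?q * card {j. j < n \<and> (u $ j \<noteq> 0 \<or> v $ j \<noteq> 0)}"
    using count_lemma[OF u v] by (simp add: algebra_simps)
  then show ?thesis by (rule ceil_bound[OF q])
qed

lemma in_edual_rowspace:
  fixes B :: "'a::field mat"
  assumes B: "B \<in> carrier_mat k n" and x: "x \<in> carrier_vec n" and z: "B *\<^sub>v x = 0\<^sub>v k"
  shows "x \<in> edual n (rowspace B)"
proof -
  have "y \<bullet> x = 0" if y: "y \<in> rowspace B" for y
  proof -
    obtain c where c: "c \<in> carrier_vec k" "y = B\<^sup>T *\<^sub>v c" using y B unfolding rowspace_def by auto
    have "y \<bullet> x = c \<bullet> (B *\<^sub>v x)" unfolding c(2) by (rule transpose_vec_mult_scalar[OF B x c(1)])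
    then show ?thesis using z c by simp
  qed
  then show ?thesis unfolding edual_def using x by auto
qed

lemma rowspace_carrier: "B \<in> carrier_mat k n \<Longrightarrow> y \<in> rowspace B \<Longrightarrow> y \<in> carrier_vec n"
  unfolding rowspace_def by (auto intro!: carrier_vecI)

lemma in_edual_C:
  fixes Br Bt :: "'a::field mat"
  assumes Br: "Br \<in> carrier_mat r n" and Bt: "Bt \<in> carrier_mat t n" and x: "x \<in> carrier_vec n"
    and z1: "Br *\<^sub>v x = 0\<^sub>v r" and z2: "Bt *\<^sub>v x = 0\<^sub>v t"
  shows "x \<in> edual n {a + b | a b. a \<in> rowspace Br \<and> b \<in> rowspace Bt}"
proof -
  have "y \<bullet> x = 0" if y: "y \<in> {a + b | a b. a \<in> rowspace Br \<and> b \<in> rowspace Bt}" for y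
  proof -
    obtain a b where ab: "y = a + b" "a \<in> rowspace Br" "b \<in> rowspace Bt" using y by auto
    have "a \<bullet> x = 0" using in_edual_rowspace[OF Br x z1] ab unfolding edual_def by auto
    moreover have "b \<bullet> x = 0" using in_edual_rowspace[OF Bt x z2] ab unfolding edual_def by auto
    moreover have "(a + b) \<bullet> x = a \<bullet> x + b \<bullet> x"
      by (rule add_scalar_prod_distrib[of _ n]) (use ab rowspace_carrier[OF Br] rowspace_carrier[OF Bt] x in auto)
    ultimately show ?thesis using ab by simp
  qed
  then show ?thesis unfolding edual_def using x by auto
qed

lemma mult_zero_vec_gen: "M \<in> carrier_mat a b \<Longrightarrow> (M :: 'a::field mat) *\<^sub>v 0\<^sub>v b = 0\<^sub>v a"
  by (rule eq_vecI) auto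

lemma dist_bound:
  fixes Br Bt A :: "'a::{finite,field} mat"
  assumes Br: "Br \<in> carrier_mat r n" and Bt: "Bt \<in> carrier_mat t n" and A: "A \<in> carrier_mat t t"
    and noeig: "\<forall>e. \<not> eigenvalue A e"
  shows "min (dH n (edual n {x + y | x y. x \<in> rowspace Br \<and> y \<in> rowspace Bt}))
      (enat (nat \<lceil>(1 + 1 / real (card (UNIV :: 'a set))) * real (the_enat (dH n (edual n (rowspace Br))))\<rceil>))
      \<le> ea_d n (rowspace (steane_gen Br Bt A))"
  unfolding ea_d_def ds_def
proof (rule INF_greatest)
  let ?D = "rowspace (steane_gen Br Bt A)"
  let ?C = "{x + y | x y. x \<in> rowspace Br \<and> y \<in> rowspace Bt}"
  let ?E = "edual n (rowspace Br)"
  fix w assume "w \<in> sdual n ?D - ?D \<inter> sdual n ?D - {0\<^sub>v (2 * n)}"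
  then have wS: "w \<in> sdual n ?D" and w0: "w \<noteq> 0\<^sub>v (2 * n)" by auto
  have wc: "w \<in> carrier_vec (n + n)" using wS unfolding sdual_def by (auto simp: mult_2)
  define u where "u = vec_first w n"
  define v where "v = vec_last w n"
  have uc: "u \<in> carrier_vec n" and vc: "v \<in> carrier_vec n" unfolding u_def v_def by auto
  have conds: "Bt *\<^sub>v v = (A * Bt) *\<^sub>v u" "Br *\<^sub>v v = 0\<^sub>v r" "Br *\<^sub>v u = 0\<^sub>v r"
    using dual_cond[OF Br Bt A wS] unfolding u_def v_def by auto
  have dw: "dim_vec w = n + n" using wc by auto
  have swt_eq: "swt n w = card {j. j < n \<and> (u $ j \<noteq> 0 \<or> v $ j \<noteq> 0)}"
    unfolding swt_def u_def v_def vec_first_def vec_last_def dw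
    by (intro arg_cong[where f=card] Collect_cong) auto
  have wuv: "w = u @\<^sub>v v" unfolding u_def v_def using wc by simp
  have hwt_le: "hwt x \<le> swt n w" if "x = u \<or> x = v" for x
    unfolding swt_eq hwt_def
    by (rule card_mono) (use that uc vc in auto)
  show "min (dH n (edual n ?C)) (enat (nat \<lceil>(1 + 1 / real (card (UNIV :: 'a set))) * real (the_enat (dH n ?E))\<rceil>))
        \<le> enat (swt n w)"
  proof (cases "Bt *\<^sub>v u = 0\<^sub>v t")
    case True
    have "Bt *\<^sub>v v = A *\<^sub>v (Bt *\<^sub>v u)" using conds(1) A Bt uc by simp
    also have "\<dots> = 0\<^sub>v t" unfolding True by (rule mult_zero_vec_gen[OF A])
    finally have Btv: "Bt *\<^sub>v v = 0\<^sub>v t" .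
    have uC: "u \<in> edual n ?C" by (rule in_edual_C[OF Br Bt uc conds(3) True])
    have vC: "v \<in> edual n ?C" by (rule in_edual_C[OF Br Bt vc conds(2) Btv])
    have "u \<noteq> 0\<^sub>v n \<or> v \<noteq> 0\<^sub>v n"
    proof (rule ccontr)
      assume "\<not> (u \<noteq> 0\<^sub>v n \<or> v \<noteq> 0\<^sub>v n)"
      then have "w = 0\<^sub>v n @\<^sub>v 0\<^sub>v n" using wuv by simp
      also have "\<dots> = 0\<^sub>v (2 * n)" by (rule eq_vecI) auto
      finally show False using w0 by simp
    qed
    then obtain x where x: "x = u \<or> x = v" "x \<in> edual n ?C" "x \<noteq> 0\<^sub>v n" using uC vC by blast
    have "dH n (edual n ?C) \<le> enat (hwt x)" using dH_le[OF x(2,3)] by blast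
    also have "\<dots> \<le> enat (swt n w)" using hwt_le[OF x(1)] by simp
    finally show ?thesis by (rule min.coboundedI1)
  next
    case False
    have u0: "u \<noteq> 0\<^sub>v n" using False Bt by (auto simp: mult_zero_vec_gen)
    have uE: "u \<in> ?E" by (rule in_edual_rowspace[OF Br uc conds(3)])
    have vE: "v + l \<cdot>\<^sub>v u \<in> ?E \<and> v + l \<cdot>\<^sub>v u \<noteq> 0\<^sub>v n" for l
    proof
      have "Br *\<^sub>v (v + l \<cdot>\<^sub>v u) = Br *\<^sub>v v + l \<cdot>\<^sub>v (Br *\<^sub>v u)"
        using Br uc vc by (simp add: mult_add_distrib_mat_vec[of _ r n] mult_mat_vec[of _ r n])
      also have "\<dots> = 0\<^sub>v r" unfolding conds(2,3) by (rule eq_vecI) auto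
      finally show "v + l \<cdot>\<^sub>v u \<in> ?E" by (intro in_edual_rowspace[OF Br]) (use uc vc in auto)
    next
      show "v + l \<cdot>\<^sub>v u \<noteq> 0\<^sub>v n"
      proof
        assume z: "v + l \<cdot>\<^sub>v u = 0\<^sub>v n"
        have vv: "v = (- l) \<cdot>\<^sub>v u"
        proof (rule eq_vecI)
          fix i assume "i < dim_vec ((- l) \<cdot>\<^sub>v u)"
          then have i: "i < n" using uc by auto
          have "(v + l \<cdot>\<^sub>v u) $ i = 0" using z i by simp
          then show "v $ i = ((- l) \<cdot>\<^sub>v u) $ i" using i uc vc by (simp add: add_eq_0_iff)
        qed (use uc vc in auto)
        have "A *\<^sub>v (Bt *\<^sub>v u) = (- l) \<cdot>\<^sub>v (Bt *\<^sub>v u)"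
          using conds(1) A Bt uc unfolding vv by (simp add: mult_mat_vec[of _ t n])
        moreover have "Bt *\<^sub>v u \<in> carrier_vec (dim_row A)" using A Bt by (auto intro!: carrier_vecI)
        moreover have "Bt *\<^sub>v u \<noteq> 0\<^sub>v (dim_row A)" using False A by auto
        ultimately have "eigenvalue A (- l)" unfolding eigenvalue_def eigenvector_def by blast
        then show False using noeig by blast
      qed
    qed
    have "nat \<lceil>(1 + 1 / real (card (UNIV :: 'a set))) * real (the_enat (dH n ?E))\<rceil> \<le> swt n w"
      unfolding swt_eq by (rule weight_bound2[OF uc vc uE u0 vE])
    then show ?thesis by (intro min.coboundedI2) simp
  qed
qed

theorem theorem2p2:
  fixes Br Bt A :: "'a::{finite,field} mat" and n r t :: nat
  assumes "n \<ge> 1"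
    and "Br \<in> carrier_mat r n" and "Bt \<in> carrier_mat t n"
    and "lin_indep_rows Br" and "lin_indep_rows Bt"
    and "rowspace Br \<inter> rowspace Bt = {0\<^sub>v n}"
    and "t \<ge> 2"
    and "A \<in> carrier_mat t t" and "invertible_mat A"
    and "\<forall>e. \<not> eigenvalue A e"
  shows
    "let C = {x + y | x y. x \<in> rowspace Br \<and> y \<in> rowspace Bt};
         D = rowspace (steane_gen Br Bt A);
         c' = real (mrank (steane_M Br Bt A)) / 2;
         q = real (card (UNIV :: 'a set));
         del1 = dH n (edual n C);
         del2 = the_enat (dH n (edual n (rowspace Br)))
     in ea_c n D = c'
      \<and> ea_k n D = real n - 2 * real r - real t + c'
      \<and> ea_d n D \<ge> min del1 (enat (nat \<lceil>(1 + 1 / q) * real del2\<rceil>))"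
proof -
  note Br = assms(2) and Bt = assms(3) and iBr = assms(4) and iBt = assms(5) and disj = assms(6)
    and A = assms(8) and noeig = assms(10)
  define m where "m = t + (r + r)"
  define G1 where "G1 = Bt @\<^sub>r (Br @\<^sub>r 0\<^sub>m r n)"
  define G2 where "G2 = (A * Bt) @\<^sub>r (0\<^sub>m r n @\<^sub>r Br)"
  define Mg where "Mg = G1 * G2\<^sup>T - G2 * G1\<^sup>T"
  define D where "D = rowspace (steane_gen Br Bt A)"
  have ABt: "A * Bt \<in> carrier_mat t n" using A Bt by auto
  have G1c: "G1 \<in> carrier_mat m n" unfolding G1_def m_def using Br Bt by auto
  have G2c: "G2 \<in> carrier_mat m n" unfolding G2_def m_def using Br ABt by auto
  have Mgc: "Mg \<in> carrier_mat m m" unfolding Mg_def using G1c G2c by auto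
  have Geq: "steane_gen Br Bt A = hcat G1 G2" unfolding G1_def G2_def by (rule steane_gen_eq[OF Br Bt A])
  have Meq: "steane_M Br Bt A = Mg" unfolding Mg_def G1_def G2_def by (rule steane_M_eq[OF Br Bt A])
  have GT: "(hcat G1 G2)\<^sup>T \<in> carrier_mat (n + n) m" using hcat_carrier[OF G1c G2c] by auto
  have Dimg: "D = (*\<^sub>v) (hcat G1 G2)\<^sup>T ` carrier_vec m"
    unfolding D_def Geq rowspace_hcat[OF G1c G2c] by auto
  have injG: "{c \<in> K. (hcat G1 G2)\<^sup>T *\<^sub>v c = 0\<^sub>v (n + n)} = {0\<^sub>v m}"
    if K: "0\<^sub>v m \<in> K" "K \<subseteq> carrier_vec m" for K
  proof -
    have "c = 0\<^sub>v m" if "c \<in> K" "(hcat G1 G2)\<^sup>T *\<^sub>v c = 0\<^sub>v (n + n)" for c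
      using indep[OF Br Bt A iBr iBt disj, of c] that K unfolding m_def Geq[symmetric] by auto
    moreover have "(hcat G1 G2)\<^sup>T *\<^sub>v 0\<^sub>v m = 0\<^sub>v (n + n)" by (rule mult_zero_vec_gen[OF GT])
    ultimately show ?thesis using K by blast
  qed
  have dimD: "subdim (2 * n) D = m"
  proof -
    have a: "subdim (n + n) ((*\<^sub>v) (hcat G1 G2)\<^sup>T ` carrier_vec m)
      + subdim m {c \<in> carrier_vec m. (hcat G1 G2)\<^sup>T *\<^sub>v c = 0\<^sub>v (n + n)} = subdim m (carrier_vec m :: 'a vec set)"
      by (rule subdim_rank_nullity[OF GT subspace_full])
    have "{c \<in> carrier_vec m. (hcat G1 G2)\<^sup>T *\<^sub>v c = 0\<^sub>v (n + n)} = {0\<^sub>v m}"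
      by (rule injG) auto
    with a have "subdim (n + n) ((*\<^sub>v) (hcat G1 G2)\<^sup>T ` carrier_vec m) = m"
      unfolding subdim_full by (simp add: subdim_zero)
    then show ?thesis unfolding Dimg mult_2 .
  qed
  define K where "K = {c \<in> carrier_vec m. Mg *\<^sub>v c = 0\<^sub>v m}"
  have Ksub: "subspace class_ring K (module_vec TYPE('a) m)"
    unfolding K_def by (rule subspace_kernel[OF Mgc subspace_full])
  have K0: "0\<^sub>v m \<in> K" "K \<subseteq> carrier_vec m" unfolding K_def using mult_zero_vec_gen[OF Mgc] by auto
  have inter: "D \<inter> sdual n D = (*\<^sub>v) (hcat G1 G2)\<^sup>T ` K"
    unfolding D_def Geq K_def Mg_def by (rule inter_char[OF G1c G2c])
  have dimI1: "subdim (2 * n) (D \<inter> sdual n D) = subdim m K"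
  proof -
    have a: "subdim (n + n) ((*\<^sub>v) (hcat G1 G2)\<^sup>T ` K)
      + subdim m {c \<in> K. (hcat G1 G2)\<^sup>T *\<^sub>v c = 0\<^sub>v (n + n)} = subdim m K"
      by (rule subdim_rank_nullity[OF GT Ksub])
    with injG[OF K0] have "subdim (n + n) ((*\<^sub>v) (hcat G1 G2)\<^sup>T ` K) = subdim m K"
      by (simp add: subdim_zero)
    then show ?thesis unfolding inter mult_2 .
  qed
  have rk: "mrank Mg + subdim m K = m"
    using subdim_rank_nullity[OF Mgc subspace_full] unfolding mrank_eq[OF Mgc] K_def subdim_full .
  have c_eq: "ea_c n D = real (mrank (steane_M Br Bt A)) / 2"
    unfolding ea_c_def dimD dimI1 Meq using rk
  proof -
    have "real (subdim m K) = real m - real (mrank Mg)" using rk by linarith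
    then show "(real m - real (subdim m K)) / 2 = real (mrank Mg) / 2" by simp
  qed
  have k_eq: "ea_k n D = real n - 2 * real r - real t + real (mrank (steane_M Br Bt A)) / 2"
    unfolding ea_k_def c_eq dimD m_def by simp
  have d_bd: "min (dH n (edual n {x + y | x y. x \<in> rowspace Br \<and> y \<in> rowspace Bt}))
      (enat (nat \<lceil>(1 + 1 / real (card (UNIV :: 'a set))) * real (the_enat (dH n (edual n (rowspace Br))))\<rceil>))
      \<le> ea_d n D"
    unfolding D_def by (rule dist_bound[OF Br Bt A noeig])
  show ?thesis unfolding Let_def D_def[symmetric] using c_eq k_eq d_bd by simp
qed

end
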